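(* Let $C$ be a cone in $\mathbb{R}^n$. Assume $X$ and $Y$ are nonempty closed decomposably $C$-antichain-convex subsets of $\mathbb{R}^n$, $Y$ is bounded and $X\cap Y=\emptyset$. (1) If $X$ is $C$-upward, then $X$ and $Y$ are strictly separated. (2) If $X$ is $C$-downward, then $X$ and $Y$ are strictly separated.
   Context: A cone in $\mathbb{R}^n$ is a subset $C$ with $\lambda C\subseteq C$ for all $\lambda>0$ (possibly empty, need not contain $0$). $S$ is $C$-antichain-convex iff for all $x,y\in S$ and $\lambda\in[0,1]$ with $y-x\notin C\cup(-C)$ one has $\lambda x+(1-\lambda)y\in S$; $S$ is decomposably $C$-antichain-convex iff it is a Minkowski sum of finitely many $C$-antichain-convex sets. $S$ is $C$-upward iff $S+C\subseteq S$; $C$-downward iff $S-C\subseteq S$. $X$ and $Y$ are strictly separated iff there is a linear functional $f$ on $\mathbb{R}^n$ with $\sup f[X]<\inf f[Y]$. *)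

theory Defs
  imports "HOL-Analysis.Analysis"
begin

definition is_cone :: "('a::real_vector) set \<Rightarrow> bool" where
  "is_cone C \<longleftrightarrow> (\<forall>t::real. \<forall>x\<in>C. t > 0 \<longrightarrow> t *\<^sub>R x \<in> C)"

definition antichain_convex :: "('a::real_vector) set \<Rightarrow> 'a set \<Rightarrow> bool" where
  "antichain_convex C S \<longleftrightarrow>
     (\<forall>x\<in>S. \<forall>y\<in>S. \<forall>t::real. 0 \<le> t \<and> t \<le> 1 \<and> y - x \<notin> C \<union> uminus ` C
        \<longrightarrow> t *\<^sub>R x + (1 - t) *\<^sub>R y \<in> S)"

definition minkowski_sum :: "nat \<Rightarrow> (nat \<Rightarrow> ('a::real_vector) set) \<Rightarrow> 'a set" where
  "minkowski_sum k A = {(\<Sum>i<k. x i) | x. \<forall>i<k. x i \<in> A i}"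

definition decomp_antichain_convex :: "('a::real_vector) set \<Rightarrow> 'a set \<Rightarrow> bool" where
  "decomp_antichain_convex C S \<longleftrightarrow>
     (\<exists>k A. k \<ge> 1 \<and> (\<forall>i<k. antichain_convex C (A i)) \<and> S = minkowski_sum k A)"

definition upward :: "('a::real_vector) set \<Rightarrow> 'a set \<Rightarrow> bool" where
  "upward C S \<longleftrightarrow> (\<forall>s\<in>S. \<forall>c\<in>C. s + c \<in> S)"

definition downward :: "('a::real_vector) set \<Rightarrow> 'a set \<Rightarrow> bool" where
  "downward C S \<longleftrightarrow> (\<forall>s\<in>S. \<forall>c\<in>C. s - c \<in> S)"

definition strictly_separated :: "('a::real_vector) set \<Rightarrow> 'a set \<Rightarrow> bool" where
  "strictly_separated X Y \<longleftrightarrow> (\<exists>f::'a \<Rightarrow> real. linear f \<and> (SUP x\<in>X. ereal (f x)) < (INF y\<in>Y. ereal (f y)))"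

end

theory Submission
  imports Defs
begin

lemma seg_plus:
  assumes C: "is_cone C" and A: "antichain_convex C A" and a: "a \<in> A" and b: "b \<in> A"
    and t: "0 \<le> t" "t \<le> 1"
  shows "\<exists>q\<in>A. \<exists>c. (c \<in> C \<or> c = 0) \<and> t *\<^sub>R a + (1 - t) *\<^sub>R b = q + c"
proof (cases "b - a \<in> C \<union> uminus ` C")
  case False
  then have "t *\<^sub>R a + (1 - t) *\<^sub>R b \<in> A" using A a b t unfolding antichain_convex_def by blast
  then show ?thesis by (intro bexI[of _ "t *\<^sub>R a + (1 - t) *\<^sub>R b"] exI[of _ 0]) auto
next
  case True
  then show ?thesis
  proof
    assume h: "b - a \<in> C"
    have e: "t *\<^sub>R a + (1 - t) *\<^sub>R b = a + (1 - t) *\<^sub>R (b - a)" by (simp add: algebra_simps)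
    have "(1 - t) *\<^sub>R (b - a) \<in> C \<or> (1 - t) *\<^sub>R (b - a) = 0"
    proof (cases "t = 1")
      case False
      then have "1 - t > 0" using t by simp
      then show ?thesis using C h unfolding is_cone_def by blast
    qed simp
    then show ?thesis using e a by (intro bexI[of _ a] exI[of _ "(1 - t) *\<^sub>R (b - a)"]) simp_all
  next
    assume "b - a \<in> uminus ` C"
    then obtain y where "y \<in> C" "b - a = - y" by blast
    then have h: "a - b \<in> C" by (metis minus_diff_eq minus_minus)
    have e: "t *\<^sub>R a + (1 - t) *\<^sub>R b = b + t *\<^sub>R (a - b)" by (simp add: algebra_simps)
    have "t *\<^sub>R (a - b) \<in> C \<or> t *\<^sub>R (a - b) = 0"
    proof (cases "t = 0")
      case False
      then have "t > 0" using t by simp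
      then show ?thesis using C h unfolding is_cone_def by blast
    qed simp
    then show ?thesis using e b by (intro bexI[of _ b] exI[of _ "t *\<^sub>R (a - b)"]) simp_all
  qed
qed

lemma cone_neg: assumes C: "is_cone C" shows "is_cone (uminus ` C)"
  unfolding is_cone_def
proof (intro allI ballI impI)
  fix t :: real and x assume t: "t > 0" and x: "x \<in> uminus ` C"
  then obtain y where y: "y \<in> C" "x = - y" by blast
  have "t *\<^sub>R y \<in> C" using C y(1) t unfolding is_cone_def by blast
  moreover have "t *\<^sub>R x = - (t *\<^sub>R y)" using y(2) by simp
  ultimately show "t *\<^sub>R x \<in> uminus ` C" by blast
qed

lemma ac_neg: assumes "antichain_convex C A" shows "antichain_convex (uminus ` C) A"
proof -
  have eq: "uminus ` C \<union> uminus ` uminus ` C = C \<union> uminus ` C" by (auto simp: image_image)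
  show ?thesis using assms unfolding antichain_convex_def eq .
qed

lemma seg_minus:
  assumes C: "is_cone C" and A: "antichain_convex C A" and a: "a \<in> A" and b: "b \<in> A"
    and t: "0 \<le> t" "t \<le> 1"
  shows "\<exists>q\<in>A. \<exists>c. (c \<in> C \<or> c = 0) \<and> t *\<^sub>R a + (1 - t) *\<^sub>R b = q - c"
proof -
  obtain q c where "q \<in> A" "c \<in> uminus ` C \<or> c = 0" "t *\<^sub>R a + (1 - t) *\<^sub>R b = q + c"
    using seg_plus[OF cone_neg[OF C] ac_neg[OF A] a b t] by blast
  then show ?thesis
    by (rule_tac x=q in bexI, rule_tac x="- c" in exI) auto
qed

lemma sum_pm:
  assumes C: "is_cone C" and A: "\<forall>i<k. antichain_convex C (A i)"
    and s: "s \<in> minkowski_sum k A" and s': "s' \<in> minkowski_sum k A"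
    and t: "0 \<le> t" "t \<le> 1"
    and sg: "sg = 1 \<or> sg = -1"
  shows "\<exists>s0\<in>minkowski_sum k A. \<exists>c. (\<forall>i<k. c i \<in> C \<or> c i = 0)
            \<and> t *\<^sub>R s + (1 - t) *\<^sub>R s' = s0 + sg *\<^sub>R (\<Sum>i<k. c i)"
proof -
  obtain x where x: "s = (\<Sum>i<k. x i)" "\<forall>i<k. x i \<in> A i" using s unfolding minkowski_sum_def by blast
  obtain x' where x': "s' = (\<Sum>i<k. x' i)" "\<forall>i<k. x' i \<in> A i" using s' unfolding minkowski_sum_def by blast
  have "\<forall>i<k. \<exists>q\<in>A i. \<exists>c. (c \<in> C \<or> c = 0) \<and> t *\<^sub>R x i + (1 - t) *\<^sub>R x' i = q + sg *\<^sub>R c"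
  proof (intro allI impI)
    fix i assume i: "i < k"
    show "\<exists>q\<in>A i. \<exists>c. (c \<in> C \<or> c = 0) \<and> t *\<^sub>R x i + (1 - t) *\<^sub>R x' i = q + sg *\<^sub>R c"
      using sg
    proof
      assume "sg = 1" then show ?thesis using seg_plus[OF C A[rule_format, OF i] x(2)[rule_format, OF i] x'(2)[rule_format, OF i] t] by simp
    next
      assume "sg = -1" then show ?thesis using seg_minus[OF C A[rule_format, OF i] x(2)[rule_format, OF i] x'(2)[rule_format, OF i] t] by simp
    qed
  qed
  then obtain q c where qc: "\<forall>i<k. q i \<in> A i \<and> (c i \<in> C \<or> c i = 0) \<and> t *\<^sub>R x i + (1 - t) *\<^sub>R x' i = q i + sg *\<^sub>R c i"
    by metis
  have "t *\<^sub>R s + (1 - t) *\<^sub>R s' = (\<Sum>i<k. t *\<^sub>R x i + (1 - t) *\<^sub>R x' i)"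
    by (simp add: x x' scaleR_sum_right sum.distrib)
  also have "\<dots> = (\<Sum>i<k. q i + sg *\<^sub>R c i)" using qc by (intro sum.cong) auto
  also have "\<dots> = (\<Sum>i<k. q i) + sg *\<^sub>R (\<Sum>i<k. c i)" by (simp add: sum.distrib scaleR_sum_right)
  finally have e: "t *\<^sub>R s + (1 - t) *\<^sub>R s' = (\<Sum>i<k. q i) + sg *\<^sub>R (\<Sum>i<k. c i)" .
  have "(\<Sum>i<k. q i) \<in> minkowski_sum k A" using qc unfolding minkowski_sum_def by blast
  then show ?thesis using e qc by blast
qed

lemma upward_sum:
  fixes k :: nat
  assumes "upward C X" "x \<in> X" "\<forall>i<k. c i \<in> C \<or> c i = 0"
  shows "x + (\<Sum>i<k. c i) \<in> X"
  using assms(3)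
proof (induction k)
  case 0 then show ?case using assms(2) by simp
next
  case (Suc k)
  then have h: "x + (\<Sum>i<k. c i) \<in> X" by simp
  have "c k \<in> C \<or> c k = 0" using Suc.prems by simp
  then have "x + (\<Sum>i<k. c i) + c k \<in> X" using h assms(1) unfolding upward_def by auto
  then show ?case by (simp add: add.assoc)
qed

lemma main_up:
  fixes C X Y :: "(real ^ 'n) set"
  assumes C: "is_cone C"
    and "X \<noteq> {}" and "Y \<noteq> {}" and "closed X" and "closed Y"
    and dX: "decomp_antichain_convex C X" and dY: "decomp_antichain_convex C Y"
    and "bounded Y" and "X \<inter> Y = {}" and up: "upward C X"
  shows "strictly_separated X Y"
proof -
  define Z where "Z = (\<Union>x\<in>X. \<Union>y\<in>Y. {x - y})"
  have cY: "compact Y" using assms by (simp add: compact_eq_bounded_closed)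
  have clZ: "closed Z" unfolding Z_def using closed_compact_differences[OF \<open>closed X\<close> cY] .
  have Z0: "0 \<notin> Z" unfolding Z_def using \<open>X \<inter> Y = {}\<close> by auto
  obtain kx AX where kx: "\<forall>i<kx. antichain_convex C (AX i)" "X = minkowski_sum kx AX"
    using dX unfolding decomp_antichain_convex_def by blast
  obtain ky AY where ky: "\<forall>i<ky. antichain_convex C (AY i)" "Y = minkowski_sum ky AY"
    using dY unfolding decomp_antichain_convex_def by blast
  have cvZ: "convex Z"
  proof (rule convexI)
    fix z w u v assume z: "z \<in> Z" and w: "w \<in> Z" and u: "0 \<le> u" "0 \<le> (v::real)" "u + v = 1"
    obtain x1 y1 where 1: "x1 \<in> X" "y1 \<in> Y" "z = x1 - y1" using z unfolding Z_def by blast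
    obtain x2 y2 where 2: "x2 \<in> X" "y2 \<in> Y" "w = x2 - y2" using w unfolding Z_def by blast
    have v: "v = 1 - u" "u \<le> 1" using u by auto
    obtain x0 c where x0: "x0 \<in> X" "\<forall>i<kx. c i \<in> C \<or> c i = 0"
      "u *\<^sub>R x1 + (1 - u) *\<^sub>R x2 = x0 + (1::real) *\<^sub>R (\<Sum>i<kx. c i)"
      using sum_pm[OF C kx(1), of x1 x2 u 1] 1 2 kx(2) u v by blast
    obtain y0 d where y0: "y0 \<in> Y" "\<forall>i<ky. d i \<in> C \<or> d i = 0"
      "u *\<^sub>R y1 + (1 - u) *\<^sub>R y2 = y0 + (-1::real) *\<^sub>R (\<Sum>i<ky. d i)"
      using sum_pm[OF C ky(1), of y1 y2 u "-1"] 1 2 ky(2) u v by blast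
    have "x0 + (\<Sum>i<kx. c i) \<in> X" using upward_sum[OF up x0(1) x0(2)] .
    then have X': "x0 + (\<Sum>i<kx. c i) + (\<Sum>i<ky. d i) \<in> X" using upward_sum[OF up _ y0(2)] by blast
    have "u *\<^sub>R z + v *\<^sub>R w = (u *\<^sub>R x1 + (1 - u) *\<^sub>R x2) - (u *\<^sub>R y1 + (1 - u) *\<^sub>R y2)"
      unfolding 1(3) 2(3) v(1) by (simp add: algebra_simps)
    also have "\<dots> = (x0 + (\<Sum>i<kx. c i) + (\<Sum>i<ky. d i)) - y0" using x0(3) y0(3) by simp
    finally show "u *\<^sub>R z + v *\<^sub>R w \<in> Z" unfolding Z_def using X' y0(1) by blast
  qed
  obtain a b where ab: "0 < b" "\<forall>x\<in>Z. b < a \<bullet> x"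
    using separating_hyperplane_closed_0[OF cvZ clZ Z0] by blast
  define f where "f = (\<lambda>x::real^'n. - (a \<bullet> x))"
  have lf: "linear f" unfolding f_def by (rule linearI) (auto simp: inner_add_right)
  have key: "f x + b < f y" if "x \<in> X" "y \<in> Y" for x y
  proof -
    have "x - y \<in> Z" unfolding Z_def using that by blast
    then have "b < a \<bullet> (x - y)" using ab by blast
    then show ?thesis unfolding f_def by (simp add: inner_diff_right)
  qed
  define m where "m = Inf (f ` Y)"
  obtain x0 where x0: "x0 \<in> X" using assms by blast
  have bdd: "bdd_below (f ` Y)"
    using key[OF x0] by (intro bdd_belowI[where m="f x0 + b"]) (auto intro: less_imp_le)
  have m1: "f x + b \<le> m" if "x \<in> X" for x
    unfolding m_def using key[OF that] \<open>Y \<noteq> {}\<close> by (intro cInf_greatest) (auto intro: less_imp_le)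
  have m2: "m \<le> f y" if "y \<in> Y" for y
    unfolding m_def using bdd that by (intro cInf_lower) auto
  have "(SUP x\<in>X. ereal (f x)) \<le> ereal (m - b)"
    using m1 by (intro SUP_least) (fastforce simp: algebra_simps)
  also have "\<dots> < ereal m" using ab by simp
  also have "\<dots> \<le> (INF y\<in>Y. ereal (f y))"
    using m2 by (intro INF_greatest) auto
  finally show ?thesis unfolding strictly_separated_def using lf by blast
qed

theorem corollary3:
  fixes C X Y :: "(real ^ 'n) set"
  assumes "is_cone C"
    and "X \<noteq> {}" and "Y \<noteq> {}" and "closed X" and "closed Y"
    and "decomp_antichain_convex C X" and "decomp_antichain_convex C Y"
    and "bounded Y" and "X \<inter> Y = {}"
  shows "(upward C X \<longrightarrow> strictly_separated X Y) \<and> (downward C X \<longrightarrow> strictly_separated X Y)"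
proof (intro conjI impI)
  assume "upward C X" then show "strictly_separated X Y" using main_up assms by blast
next
  assume d: "downward C X"
  have u: "upward (uminus ` C) X" using d unfolding upward_def downward_def by auto
  have dec: "decomp_antichain_convex (uminus ` C) S" if "decomp_antichain_convex C S" for S :: "(real ^ 'n) set"
    using that ac_neg unfolding decomp_antichain_convex_def by blast
  show "strictly_separated X Y"
    using main_up[OF cone_neg[OF assms(1)] assms(2-5) dec[OF assms(6)] dec[OF assms(7)] assms(8,9) u] .
qed

end
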